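(* Let $N\ge1$, $w\ge1$, fix a round $t$, and let $\rho>1$. For each client $n\in\{1,\dots,N\}$ let $\Delta\theta_n^t$ be a random vector in $\mathbb{R}^w$ (its randomness coming from the local dataset) with $\mathbb{E}\|\Delta\theta_n^t\|^\rho<\infty$, let $q_n^t\in(0,1]$ and $c_n^t>0$ be deterministic, and set $q^t=\frac1N\sum_{n=1}^N q_n^t$. Let $b_n^t\sim\mathrm{Bernoulli}(q_n^t)$ and let $z_n^t,\tilde z_n^t$ be zero-mean Gaussian vectors in $\mathbb{R}^w$, all independent of the $\Delta\theta_n^t$. Define $\mathrm{clip}(x,c)=x\min(1,c/\|x\|)$, the aggregate update $\Delta\theta^t=\frac1N\sum_{n=1}^N\Delta\theta_n^t$, the perturbed aggregate $$\tilde\Delta\theta^t=\frac1N\sum_{n=1}^N\frac{1}{q^t}\Big(b_n^t\big(\mathrm{clip}(\Delta\theta_n^t,c_n^t)+z_n^t\big)+(1-b_n^t)\tilde z_n^t\Big),$$ and $\mathrm{Error}_t=\Delta\theta^t-\tilde\Delta\theta^t$. Then, with expectation taken over the local-data randomness, the client sampling and the Gaussian noise, $$\big\|\mathbb{E}[\mathrm{Error}_t]\big\|\le\frac1N\Big\|\sum_{n=1}^N\Big(1-\frac{q_n^t}{q^t}\Big)\mathbb{E}[\Delta\theta_n^t]\Big\|+\frac1N\sum_{n=1}^N\frac{q_n^t}{q^t}\,\frac{\mathbb{E}\|\Delta\theta_n^t\|^\rho}{(c_n^t)^{\rho-1}}.$$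
   Context: Setting: one round of differentially private federated averaging in which client $n$ participates (is sampled) with probability $q_n^t$, clips its local model update to norm $c_n^t$, and adds Gaussian noise; non-sampled clients contribute pure noise; $q^t$ is the average sampling rate. $\|\cdot\|$ is the Euclidean norm. *)

theory Defs
  imports "HOL-Probability.Probability"
begin

text \<open>Clipping: clip(x,c) = x * min(1, c/norm x). (At x = 0 this yields 0.)\<close>
definition clip :: "'v::real_normed_vector \<Rightarrow> real \<Rightarrow> 'v" where
  "clip x c = min 1 (c / norm x) *\<^sub>R x"

definition zero_mean_gaussian :: "'a measure \<Rightarrow> ('a \<Rightarrow> 'v::euclidean_space) \<Rightarrow> bool" where
  "zero_mean_gaussian M X \<longleftrightarrow> X \<in> borel_measurable M \<and>
     (\<forall>u. (AE x in M. u \<bullet> X x = 0) \<or>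
          (\<exists>\<sigma>>0. distributed M lborel (\<lambda>x. u \<bullet> X x) (\<lambda>y. ennreal (normal_density 0 \<sigma> y))))"

text \<open>Index type for the independent family: the (joint) local-data randomness,
  the sampling indicators b_n, the noises z_n and the noises z~_n.\<close>
datatype ridx = DataIdx | SampIdx nat | NoiseIdx nat | AltNoiseIdx nat

definition fl_events ::
  "'a measure \<Rightarrow> nat \<Rightarrow> (nat \<Rightarrow> 'a \<Rightarrow> 'v::euclidean_space) \<Rightarrow> (nat \<Rightarrow> 'a \<Rightarrow> bool)
     \<Rightarrow> (nat \<Rightarrow> 'a \<Rightarrow> 'v) \<Rightarrow> (nat \<Rightarrow> 'a \<Rightarrow> 'v) \<Rightarrow> ridx \<Rightarrow> 'a set set" where
  "fl_events M N D b z zt i = (case i of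
      DataIdx \<Rightarrow> sigma_sets (space M)
                   (\<Union>n\<in>{1..N}. {D n -` A \<inter> space M | A. A \<in> sets (borel :: 'v measure)})
    | SampIdx n \<Rightarrow> {b n -` A \<inter> space M | A. A \<in> sets (count_space (UNIV :: bool set))}
    | NoiseIdx n \<Rightarrow> {z n -` A \<inter> space M | A. A \<in> sets (borel :: 'v measure)}
    | AltNoiseIdx n \<Rightarrow> {zt n -` A \<inter> space M | A. A \<in> sets (borel :: 'v measure)})"

definition fl_index :: "nat \<Rightarrow> ridx set" where
  "fl_index N = {DataIdx} \<union> SampIdx ` {1..N} \<union> NoiseIdx ` {1..N} \<union> AltNoiseIdx ` {1..N}"

end

theory Submission
  imports Defs
begin


lemma (in prob_space) indep_var_from_family:
  fixes X Y :: "'a \<Rightarrow> real"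
  assumes ind: "indep_sets F I" and ij: "i \<in> I" "j \<in> I" "i \<noteq> j"
    and rv: "random_variable borel X" "random_variable borel Y"
    and FX: "\<And>A. A \<in> sets borel \<Longrightarrow> X -` A \<inter> space M \<in> F i"
    and FY: "\<And>A. A \<in> sets borel \<Longrightarrow> Y -` A \<inter> space M \<in> F j"
  shows "indep_var borel X borel Y"
proof -
  have FE: "F k \<subseteq> events" if "k \<in> I" for k using ind that unfolding indep_sets_def by auto
  have "indep_set (F i) (F j)"
  proof (subst indep_sets2_eq, intro conjI ballI)
    show "F i \<subseteq> events" "F j \<subseteq> events" using FE ij by auto
    fix a b assume ab: "a \<in> F i" "b \<in> F j"
    define A where "A = (\<lambda>k. if k = i then a else b)"
    have "prob (\<Inter>k\<in>{i,j}. A k) = (\<Prod>k\<in>{i,j}. prob (A k))"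
      by (rule indep_setsD[OF ind]) (use ij ab in \<open>auto simp: A_def\<close>)
    then show "prob (a \<inter> b) = prob a * prob b" using ij by (simp add: A_def Int_commute)
  qed
  then have "indep_sets (case_bool (F i) (F j)) UNIV" unfolding indep_set_def .
  then have "indep_sets (\<lambda>k. {case_bool X Y k -` A \<inter> space M | A. A \<in> sets (case_bool borel borel k)}) UNIV"
    by (rule indep_sets_mono_sets) (auto split: bool.split intro: FX FY)
  then show ?thesis unfolding indep_var_def indep_vars_def2 using rv by (auto split: bool.split)
qed

lemma integral_component_cart:
  fixes f :: "'a \<Rightarrow> real ^ 'n"
  assumes "integrable M f"
  shows "(LINT x|M. f x) $ i = (LINT x|M. f x $ i)"
  using integral_inner_left[of "axis i 1" M f] assms by (simp add: cart_eq_inner_axis)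

lemma integrable_from_components_cart:
  fixes f :: "'a \<Rightarrow> real ^ 'n"
  assumes "f \<in> borel_measurable M" "\<And>i. integrable M (\<lambda>x. f x $ i)"
  shows "integrable M f"
proof (rule Bochner_Integration.integrable_bound[where f="\<lambda>x. \<Sum>i\<in>UNIV. \<bar>f x $ i\<bar>"])
  show "integrable M (\<lambda>x. \<Sum>i\<in>UNIV. \<bar>f x $ i\<bar>)" using assms by auto
  show "f \<in> borel_measurable M" by fact
  show "AE x in M. norm (f x) \<le> norm (\<Sum>i\<in>UNIV. \<bar>f x $ i\<bar>)"
    using norm_le_l1_cart by (auto intro!: AE_I2 simp: sum_nonneg)
qed

lemma (in prob_space) indep_scaleR:
  fixes X :: "'a \<Rightarrow> real ^ 'n" and Y :: "'a \<Rightarrow> real"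
  assumes ind: "\<And>i. indep_var borel Y borel (\<lambda>x. X x $ i)"
    and iX: "integrable M X" and iY: "integrable M Y"
  shows "integrable M (\<lambda>x. Y x *\<^sub>R X x)"
    and "(LINT x|M. Y x *\<^sub>R X x) = (LINT x|M. Y x) *\<^sub>R (LINT x|M. X x)"
proof -
  have ic: "integrable M (\<lambda>x. X x $ i)" for i
    using integrable_inner_left[OF iX, of "axis i 1"] by (simp add: cart_eq_inner_axis)
  have ip: "integrable M (\<lambda>x. Y x * X x $ i)" for i
    by (rule indep_var_integrable[OF ind iY ic])
  show I: "integrable M (\<lambda>x. Y x *\<^sub>R X x)"
    by (rule integrable_from_components_cart) (use iX iY ip in auto)
  show "(LINT x|M. Y x *\<^sub>R X x) = (LINT x|M. Y x) *\<^sub>R (LINT x|M. X x)"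
  proof (subst vec_eq_iff, intro allI)
    fix i
    show "(LINT x|M. Y x *\<^sub>R X x) $ i = ((LINT x|M. Y x) *\<^sub>R (LINT x|M. X x)) $ i"
      using integral_component_cart[OF I, of i] integral_component_cart[OF iX, of i]
        indep_var_lebesgue_integral[OF ind iY ic] by simp
  qed
qed



lemma (in prob_space) gauss_comp:
  fixes Z :: "'a \<Rightarrow> real ^ 'n"
  assumes g: "zero_mean_gaussian M Z"
  shows "integrable M (\<lambda>x. Z x $ i) \<and> (LINT x|M. Z x $ i) = 0"
proof -
  have Zm[measurable]: "Z \<in> borel_measurable M" using g unfolding zero_mean_gaussian_def by auto
  have eq: "(\<lambda>x. axis i 1 \<bullet> Z x) = (\<lambda>x. Z x $ i)"
    by (simp add: cart_eq_inner_axis inner_commute)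
  have eqx: "\<And>x. axis i 1 \<bullet> Z x = Z x $ i" by (simp add: cart_eq_inner_axis inner_commute)
  from g have "(AE x in M. axis i 1 \<bullet> Z x = 0) \<or>
          (\<exists>\<sigma>>0. distributed M lborel (\<lambda>x. axis i 1 \<bullet> Z x) (\<lambda>y. ennreal (normal_density 0 \<sigma> y)))"
    unfolding zero_mean_gaussian_def by blast
  then show ?thesis
  proof
    assume ae: "AE x in M. axis i 1 \<bullet> Z x = 0"
    have m: "(\<lambda>x. Z x $ i) \<in> borel_measurable M" unfolding cart_eq_inner_axis by measurable
    have ae': "AE x in M. Z x $ i = (\<lambda>x. 0::real) x" using ae by (simp add: eqx)
    show ?thesis
      using integrable_cong_AE[OF m _ ae'] integral_cong_AE[OF m _ ae'] by simp
  next
    assume "\<exists>\<sigma>>0. distributed M lborel (\<lambda>x. axis i 1 \<bullet> Z x) (\<lambda>y. ennreal (normal_density 0 \<sigma> y))"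
    then obtain \<sigma> where s: "\<sigma> > 0" and d: "distributed M lborel (\<lambda>x. Z x $ i) (\<lambda>y. ennreal (normal_density 0 \<sigma> y))"
      by (auto simp: eqx)
    have "integrable M (\<lambda>x. Z x $ i)"
      using distributed_integrable_var[OF d] normal_density_nonneg integrable_normal_moment_nz_1 s by metis
    moreover have "expectation (\<lambda>x. Z x $ i) = 0"
      by (rule normal_distributed_expectation[OF s d])
    ultimately show ?thesis by simp
  qed
qed

lemma (in prob_space) gauss_int:
  fixes Z :: "'a \<Rightarrow> real ^ 'n"
  assumes g: "zero_mean_gaussian M Z"
  shows "integrable M Z" "(LINT x|M. Z x) = 0"
proof -
  have Zm[measurable]: "Z \<in> borel_measurable M" using g unfolding zero_mean_gaussian_def by auto
  show I: "integrable M Z"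
    by (rule integrable_from_components_cart) (use gauss_comp[OF g] in auto)
  show "(LINT x|M. Z x) = 0"
    by (subst vec_eq_iff) (use integral_component_cart[OF I] gauss_comp[OF g] in auto)
qed

lemma clip_bound:
  fixes x :: "'v::real_normed_vector"
  assumes c: "c > 0" and r: "\<rho> > 1"
  shows "norm (x - clip x c) \<le> norm x powr \<rho> / c powr (\<rho> - 1)"
proof (cases "norm x \<le> c")
  case True
  then have "clip x c = x"
  proof (cases "x = 0")
    case False
    then have "c / norm x \<ge> 1" using True by (simp add: field_simps)
    then show ?thesis by (simp add: clip_def)
  qed (simp add: clip_def)
  then show ?thesis using c by simp
next
  case False
  define a where "a = norm x"
  have a: "a > c" using False a_def by simp
  then have ap: "a > 0" using c by simp
  have "clip x c = (c / a) *\<^sub>R x" using a ap by (simp add: clip_def a_def)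
  then have "x - clip x c = (1 - c / a) *\<^sub>R x" by (simp add: algebra_simps)
  then have "norm (x - clip x c) = (1 - c/a) * a" using a ap by (simp add: a_def)
  also have "\<dots> \<le> a" using ap c by (simp add: field_simps)
  also have "a = a * 1" by simp
  also have "\<dots> \<le> a * (a / c) powr (\<rho> - 1)"
    using ap a c r by (intro mult_left_mono ge_one_powr_ge_zero) auto
  also have "\<dots> = a powr \<rho> / c powr (\<rho> - 1)"
    using ap c by (simp add: powr_divide powr_diff field_simps powr_add)
  finally show ?thesis by (simp add: a_def)
qed


lemma norm_clip_le:
  fixes x :: "'v::real_normed_vector"
  assumes "c > 0"
  shows "norm (clip x c) \<le> norm x"
proof -
  have "c / norm x \<ge> 0" using assms by simp
  then have "\<bar>min 1 (c / norm x)\<bar> \<le> 1" by (auto simp: abs_if min_def)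
  then have "\<bar>min 1 (c / norm x)\<bar> * norm x \<le> 1 * norm x" by (intro mult_right_mono) auto
  then show ?thesis by (simp add: clip_def)
qed

lemma norm_le_powr:
  fixes a \<rho> :: real
  assumes "a \<ge> 0" "\<rho> > 1"
  shows "a \<le> 1 + a powr \<rho>"
proof (cases "a \<le> 1")
  case True then show ?thesis by (simp add: add_increasing2)
next
  case False
  then have "a powr 1 \<le> a powr \<rho>" using assms by (intro powr_mono) auto
  then show ?thesis using assms by simp
qed

theorem mainTheorem3:
  fixes M :: "'a measure"
    and N :: nat and \<rho> :: real
    and D :: "nat \<Rightarrow> 'a \<Rightarrow> real ^ 'w"
    and q c :: "nat \<Rightarrow> real" and qbar :: real
    and b :: "nat \<Rightarrow> 'a \<Rightarrow> bool"
    and z zt :: "nat \<Rightarrow> 'a \<Rightarrow> real ^ 'w"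
  assumes "prob_space M"
    and "N \<ge> 1" and "\<rho> > 1"
    and D_meas: "\<And>n. n \<in> {1..N} \<Longrightarrow> D n \<in> borel_measurable M"
    and D_mom: "\<And>n. n \<in> {1..N} \<Longrightarrow> integrable M (\<lambda>x. norm (D n x) powr \<rho>)"
    and q_range: "\<And>n. n \<in> {1..N} \<Longrightarrow> 0 < q n \<and> q n \<le> 1"
    and c_pos: "\<And>n. n \<in> {1..N} \<Longrightarrow> c n > 0"
    and qbar_def: "qbar = (\<Sum>n=1..N. q n) / real N"
    and b_meas: "\<And>n. n \<in> {1..N} \<Longrightarrow> b n \<in> measurable M (count_space UNIV)"
    and b_bern: "\<And>n. n \<in> {1..N} \<Longrightarrow>
                   distr M (count_space UNIV) (b n) = measure_pmf (bernoulli_pmf (q n))"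
    and z_gauss: "\<And>n. n \<in> {1..N} \<Longrightarrow> zero_mean_gaussian M (z n)"
    and zt_gauss: "\<And>n. n \<in> {1..N} \<Longrightarrow> zero_mean_gaussian M (zt n)"
    and indep: "prob_space.indep_sets M (fl_events M N D b z zt) (fl_index N)"
  shows "norm (LINT x|M.
            (1 / real N) *\<^sub>R (\<Sum>n=1..N. D n x)
          - (1 / real N) *\<^sub>R (\<Sum>n=1..N. (1 / qbar) *\<^sub>R
               ((if b n x then 1 else 0) *\<^sub>R (clip (D n x) (c n) + z n x)
                + (1 - (if b n x then 1 else 0)) *\<^sub>R zt n x)))
         \<le> (1 / real N) * norm (\<Sum>n=1..N. (1 - q n / qbar) *\<^sub>R (LINT x|M. D n x))
           + (1 / real N) * (\<Sum>n=1..N. (q n / qbar) *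
               ((LINT x|M. norm (D n x) powr \<rho>) / c n powr (\<rho> - 1)))"
  
proof -
  interpret prob_space M by fact
  let ?F = "fl_events M N D b z zt" and ?I = "fl_index N"
  define C where "C n x = clip (D n x) (c n)" for n x
  define Ib where "Ib n x = (if b n x then 1 else 0 :: real)" for n x
  define ED where "ED n = (LINT x|M. D n x)" for n
  define EC where "EC n = (LINT x|M. C n x)" for n
  have Nne: "{1..N} \<noteq> {}" using assms(2) by auto
  have qbar_pos: "qbar > 0"
  proof -
    have "(\<Sum>n=1..N. q n) > 0" using q_range Nne by (intro sum_pos) auto
    then show ?thesis using assms(2) qbar_def by simp
  qed
  have T: "integrable M (D n) \<and> integrable M (C n) \<and>
      integrable M (\<lambda>x. (1 / qbar) *\<^sub>R ((if b n x then 1 else 0) *\<^sub>R (clip (D n x) (c n) + z n x)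
                + (1 - (if b n x then 1 else 0)) *\<^sub>R zt n x)) \<and>
      (LINT x|M. (1 / qbar) *\<^sub>R ((if b n x then 1 else 0) *\<^sub>R (clip (D n x) (c n) + z n x)
                + (1 - (if b n x then 1 else 0)) *\<^sub>R zt n x)) = (1 / qbar) *\<^sub>R (q n *\<^sub>R EC n)"
    if n: "n \<in> {1..N}" for n
  proof -
    note [measurable] = D_meas[OF n] b_meas[OF n]
    have zm[measurable]: "z n \<in> borel_measurable M" "zt n \<in> borel_measurable M"
      using z_gauss[OF n] zt_gauss[OF n] unfolding zero_mean_gaussian_def by auto
    have Cm[measurable]: "C n \<in> borel_measurable M" unfolding C_def clip_def by measurable
    have iD: "integrable M (D n)"
    proof (rule Bochner_Integration.integrable_bound[where f="\<lambda>x. 1 + norm (D n x) powr \<rho>"])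
      show "integrable M (\<lambda>x. 1 + norm (D n x) powr \<rho>)" using D_mom[OF n] by auto
      show "AE x in M. norm (D n x) \<le> norm (1 + norm (D n x) powr \<rho>)"
        using norm_le_powr[OF norm_ge_zero assms(3)] by (auto intro!: AE_I2)
    qed simp
    have iC: "integrable M (C n)"
    proof (rule Bochner_Integration.integrable_bound[OF iD])
      show "AE x in M. norm (C n x) \<le> norm (D n x)"
        using norm_clip_le c_pos[OF n] by (auto intro!: AE_I2 simp: C_def)
    qed simp
    have qn: "0 \<le> q n" "q n \<le> 1" using q_range[OF n] by auto
    have Ibint: "integrable M (\<lambda>x. g (b n x))" for g :: "bool \<Rightarrow> real"
    proof (rule integrable_const_bound[where B="\<bar>g True\<bar> + \<bar>g False\<bar>"])
      show "AE x in M. norm (g (b n x)) \<le> \<bar>g True\<bar> + \<bar>g False\<bar>"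
      proof (intro AE_I2)
        have "\<bar>g v\<bar> \<le> \<bar>g True\<bar> + \<bar>g False\<bar>" for v by (cases v) auto
        then show "norm (g (b n x)) \<le> \<bar>g True\<bar> + \<bar>g False\<bar>" for x by simp
      qed
    qed measurable
    have Ibexp: "(LINT x|M. g (b n x)) = g True * q n + g False * (1 - q n)" for g :: "bool \<Rightarrow> real"
    proof -
      have "(LINT x|M. g (b n x)) = integral\<^sup>L (distr M (count_space UNIV) (b n)) g"
        by (rule integral_distr[symmetric]) auto
      also have "\<dots> = g True * q n + g False * (1 - q n)"
        using qn by (simp add: b_bern[OF n])
      finally show ?thesis .
    qed
    have SI: "SampIdx n \<in> ?I" "DataIdx \<in> ?I" "NoiseIdx n \<in> ?I" "AltNoiseIdx n \<in> ?I"
      using n by (auto simp: fl_index_def)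
    have FS: "(\<lambda>x. g (b n x)) -` A \<inter> space M \<in> ?F (SampIdx n)" for g :: "bool \<Rightarrow> real" and A
      unfolding fl_events_def by (auto intro!: exI[of _ "g -` A"])
    have indC: "indep_var borel (\<lambda>x. g (b n x)) borel (\<lambda>x. C n x $ k)" for g :: "bool \<Rightarrow> real" and k
    proof (rule indep_var_from_family[OF indep SI(1) SI(2)])
      fix A :: "real set" assume A: "A \<in> sets borel"
      define h where "h v = clip v (c n) $ k" for v :: "real ^ 'w"
      have hm: "h \<in> borel_measurable borel" unfolding h_def clip_def cart_eq_inner_axis by measurable
      have "h -` A \<inter> space borel \<in> sets borel" using hm A by (rule measurable_sets)
      then have "D n -` (h -` A) \<inter> space M \<in> (\<Union>n\<in>{1..N}. {D n -` A \<inter> space M | A. A \<in> sets (borel :: (real ^ 'w) measure)})"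
        using n by (intro UN_I[OF n]) auto
      then have "D n -` (h -` A) \<inter> space M \<in> ?F DataIdx"
        unfolding fl_events_def ridx.case by (rule sigma_sets.Basic)
      moreover have "(\<lambda>x. C n x $ k) -` A \<inter> space M = D n -` (h -` A) \<inter> space M"
        by (auto simp: C_def h_def)
      ultimately show "(\<lambda>x. C n x $ k) -` A \<inter> space M \<in> ?F DataIdx" by simp
    next
      show "(\<lambda>x. C n x $ k) \<in> borel_measurable M" unfolding cart_eq_inner_axis by measurable
    qed (auto intro: FS)
    have indZ: "indep_var borel (\<lambda>x. g (b n x)) borel (\<lambda>x. z n x $ k)"
      and indZt: "indep_var borel (\<lambda>x. g (b n x)) borel (\<lambda>x. zt n x $ k)"
      for g :: "bool \<Rightarrow> real" and k
    proof -
      have pm: "(\<lambda>v::real^'w. v $ k) -` A \<inter> space borel \<in> sets borel" if "A \<in> sets borel" for A :: "real set"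
        by (rule measurable_sets[OF _ that]) (unfold cart_eq_inner_axis, measurable)
      show "indep_var borel (\<lambda>x. g (b n x)) borel (\<lambda>x. z n x $ k)"
      proof (rule indep_var_from_family[OF indep SI(1) SI(3)])
        fix A :: "real set" assume A: "A \<in> sets borel"
        show "(\<lambda>x. z n x $ k) -` A \<inter> space M \<in> ?F (NoiseIdx n)"
          unfolding fl_events_def using pm[OF A] by (auto intro!: exI[of _ "(\<lambda>v::real^'w. v $ k) -` A"])
      next
        show "(\<lambda>x. z n x $ k) \<in> borel_measurable M" unfolding cart_eq_inner_axis by measurable
      qed (auto intro: FS)
      show "indep_var borel (\<lambda>x. g (b n x)) borel (\<lambda>x. zt n x $ k)"
      proof (rule indep_var_from_family[OF indep SI(1) SI(4)])
        fix A :: "real set" assume A: "A \<in> sets borel"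
        show "(\<lambda>x. zt n x $ k) -` A \<inter> space M \<in> ?F (AltNoiseIdx n)"
          unfolding fl_events_def using pm[OF A] by (auto intro!: exI[of _ "(\<lambda>v::real^'w. v $ k) -` A"])
      next
        show "(\<lambda>x. zt n x $ k) \<in> borel_measurable M" unfolding cart_eq_inner_axis by measurable
      qed (auto intro: FS)
    qed
    have gz: "integrable M (z n)" "(LINT x|M. z n x) = 0" using gauss_int[OF z_gauss[OF n]] by auto
    have gzt: "integrable M (zt n)" "(LINT x|M. zt n x) = 0" using gauss_int[OF zt_gauss[OF n]] by auto
    let ?g1 = "\<lambda>v. if v then 1 else 0 :: real"
    let ?g2 = "\<lambda>v. 1 - (if v then 1 else 0 :: real)"
    have t1: "integrable M (\<lambda>x. ?g1 (b n x) *\<^sub>R C n x)"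
      "(LINT x|M. ?g1 (b n x) *\<^sub>R C n x) = (LINT x|M. ?g1 (b n x)) *\<^sub>R EC n"
      using indep_scaleR[OF indC[of ?g1] iC Ibint[of ?g1]] unfolding EC_def by auto
    have t2: "integrable M (\<lambda>x. ?g1 (b n x) *\<^sub>R z n x)"
      "(LINT x|M. ?g1 (b n x) *\<^sub>R z n x) = 0"
      using indep_scaleR[OF indZ[of ?g1] gz(1) Ibint[of ?g1]] gz(2) by auto
    have t3: "integrable M (\<lambda>x. ?g2 (b n x) *\<^sub>R zt n x)"
      "(LINT x|M. ?g2 (b n x) *\<^sub>R zt n x) = 0"
      using indep_scaleR[OF indZt[of ?g2] gzt(1) Ibint[of ?g2]] gzt(2) by auto
    have e1: "(LINT x|M. ?g1 (b n x)) = q n" using Ibexp[of ?g1] by simp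
    have pt: "(\<lambda>x. (1 / qbar) *\<^sub>R ((if b n x then 1 else 0) *\<^sub>R (clip (D n x) (c n) + z n x)
                + (1 - (if b n x then 1 else 0)) *\<^sub>R zt n x))
          = (\<lambda>x. (1 / qbar) *\<^sub>R (?g1 (b n x) *\<^sub>R C n x + ?g1 (b n x) *\<^sub>R z n x + ?g2 (b n x) *\<^sub>R zt n x))"
      by (simp add: C_def scaleR_add_right)
    show ?thesis
      unfolding pt using iD iC t1 t2 t3 e1 by simp
  qed
  have iDs: "\<And>n. n \<in> {1..N} \<Longrightarrow> integrable M (D n)" using T by blast
  have iCs: "\<And>n. n \<in> {1..N} \<Longrightarrow> integrable M (C n)" using T by blast
  have iTs: "\<And>n. n \<in> {1..N} \<Longrightarrow> integrable M (\<lambda>x. (1 / qbar) *\<^sub>R ((if b n x then 1 else 0) *\<^sub>R (clip (D n x) (c n) + z n x)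
                + (1 - (if b n x then 1 else 0)) *\<^sub>R zt n x))" using T by blast
  have ETs: "\<And>n. n \<in> {1..N} \<Longrightarrow> (LINT x|M. (1 / qbar) *\<^sub>R ((if b n x then 1 else 0) *\<^sub>R (clip (D n x) (c n) + z n x)
                + (1 - (if b n x then 1 else 0)) *\<^sub>R zt n x)) = (1 / qbar) *\<^sub>R (q n *\<^sub>R EC n)" using T by blast
  let ?T = "\<lambda>n x. (1 / qbar) *\<^sub>R ((if b n x then 1 else 0) *\<^sub>R (clip (D n x) (c n) + z n x)
                + (1 - (if b n x then 1 else 0)) *\<^sub>R zt n x)"
  have iA: "integrable M (\<lambda>x. (1 / real N) *\<^sub>R (\<Sum>n=1..N. D n x))"
    using iDs by (intro integrable_scaleR_right integrable_sum) auto
  have iB: "integrable M (\<lambda>x. (1 / real N) *\<^sub>R (\<Sum>n=1..N. ?T n x))"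
    using iTs by (intro integrable_scaleR_right integrable_sum) auto
  have A: "(LINT x|M. (1 / real N) *\<^sub>R (\<Sum>n=1..N. D n x)) = (1 / real N) *\<^sub>R (\<Sum>n=1..N. ED n)"
    using iDs by (simp add: integral_sum ED_def)
  have Bq: "(LINT x|M. (1 / real N) *\<^sub>R (\<Sum>n=1..N. ?T n x)) = (1 / real N) *\<^sub>R (\<Sum>n=1..N. (1 / qbar) *\<^sub>R (q n *\<^sub>R EC n))"
  proof -
    define T where "T = ?T"
    have "(LINT x|M. (\<Sum>n=1..N. T n x)) = (\<Sum>n=1..N. (LINT x|M. T n x))"
      by (rule Bochner_Integration.integral_sum) (use iTs in \<open>simp add: T_def\<close>)
    then have "(LINT x|M. (\<Sum>n=1..N. ?T n x)) = (\<Sum>n=1..N. (LINT x|M. ?T n x))"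
      by (simp add: T_def)
    also have "\<dots> = (\<Sum>n=1..N. (1 / qbar) *\<^sub>R (q n *\<^sub>R EC n))"
      by (rule sum.cong[OF refl]) (rule ETs)
    finally show ?thesis by simp
  qed
  have E: "(LINT x|M.
            (1 / real N) *\<^sub>R (\<Sum>n=1..N. D n x)
          - (1 / real N) *\<^sub>R (\<Sum>n=1..N. ?T n x))
        = (1 / real N) *\<^sub>R (\<Sum>n=1..N. ED n) - (1 / real N) *\<^sub>R (\<Sum>n=1..N. (1 / qbar) *\<^sub>R (q n *\<^sub>R EC n))"
    by (subst Bochner_Integration.integral_diff[OF iA iB]) (simp only: A Bq)
  also have "\<dots> = (1 / real N) *\<^sub>R ((\<Sum>n=1..N. (1 - q n / qbar) *\<^sub>R ED n) + (\<Sum>n=1..N. (q n / qbar) *\<^sub>R (ED n - EC n)))"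
  proof -
    have "(\<Sum>n=1..N. ED n) - (\<Sum>n=1..N. (1 / qbar) *\<^sub>R (q n *\<^sub>R EC n))
        = (\<Sum>n=1..N. (1 - q n / qbar) *\<^sub>R ED n) + (\<Sum>n=1..N. (q n / qbar) *\<^sub>R (ED n - EC n))"
      by (simp add: sum.distrib[symmetric] sum_subtractf[symmetric] algebra_simps)
    then show ?thesis by (simp add: scaleR_diff_right[symmetric])
  qed
  finally have E' : "norm (LINT x|M.
            (1 / real N) *\<^sub>R (\<Sum>n=1..N. D n x)
          - (1 / real N) *\<^sub>R (\<Sum>n=1..N. (1 / qbar) *\<^sub>R
               ((if b n x then 1 else 0) *\<^sub>R (clip (D n x) (c n) + z n x)
                + (1 - (if b n x then 1 else 0)) *\<^sub>R zt n x)))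
     \<le> (1 / real N) * norm (\<Sum>n=1..N. (1 - q n / qbar) *\<^sub>R ED n) + (1 / real N) * norm (\<Sum>n=1..N. (q n / qbar) *\<^sub>R (ED n - EC n))"
    by (simp add: add_divide_distrib[symmetric] divide_right_mono norm_triangle_ineq)
  have B: "norm (\<Sum>n=1..N. (q n / qbar) *\<^sub>R (ED n - EC n))
      \<le> (\<Sum>n=1..N. (q n / qbar) * ((LINT x|M. norm (D n x) powr \<rho>) / c n powr (\<rho> - 1)))"
  proof -
    have "norm (\<Sum>n=1..N. (q n / qbar) *\<^sub>R (ED n - EC n)) \<le> (\<Sum>n=1..N. norm ((q n / qbar) *\<^sub>R (ED n - EC n)))"
      by (rule norm_sum)
    also have "\<dots> \<le> (\<Sum>n=1..N. (q n / qbar) * ((LINT x|M. norm (D n x) powr \<rho>) / c n powr (\<rho> - 1)))"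
    proof (rule sum_mono)
      fix n assume n: "n \<in> {1..N}"
      have qq: "0 \<le> q n / qbar" using q_range[OF n] qbar_pos by simp
      have "norm (ED n - EC n) = norm (LINT x|M. D n x - C n x)"
        using iDs[OF n] iCs[OF n] by (simp add: ED_def EC_def)
      also have "\<dots> \<le> (LINT x|M. norm (D n x - C n x))" by (rule integral_norm_bound)
      also have "\<dots> \<le> (LINT x|M. norm (D n x) powr \<rho> / c n powr (\<rho> - 1))"
        using iDs[OF n] iCs[OF n] D_mom[OF n] clip_bound[OF c_pos[OF n] assms(3)]
          integrable_norm[OF Bochner_Integration.integrable_diff[OF iDs[OF n] iCs[OF n]]]
        by (intro integral_mono) (auto simp: C_def)
      also have "\<dots> = (LINT x|M. norm (D n x) powr \<rho>) / c n powr (\<rho> - 1)" by simp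
      finally have h: "norm (ED n - EC n) \<le> (LINT x|M. norm (D n x) powr \<rho>) / c n powr (\<rho> - 1)" .
      show "norm ((q n / qbar) *\<^sub>R (ED n - EC n)) \<le> (q n / qbar) * ((LINT x|M. norm (D n x) powr \<rho>) / c n powr (\<rho> - 1))"
        using mult_left_mono[OF h qq] qq by (simp only: norm_scaleR abs_of_nonneg)
    qed
    finally show ?thesis .
  qed
  have Npos: "0 \<le> 1 / real N" by simp
  show ?thesis
    using E' mult_left_mono[OF B Npos] by (simp add: ED_def)
qed

end
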